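(* Let $x\in\mathcal{X}$, $\delta\in[0,1]$ and $x'=\eta(x,\delta)$. Then $x'\in\mathcal{X}$ and $\|x'-x\|\le\delta$, with strict inequality when $\delta>0$. Furthermore, when $\delta>0$, $x'\notin\partial\mathcal{X}$.
   Context: Fix $D\ge1$, Euclidean norm $\|\cdot\|$ on $\mathbb{R}^D$. For $A\subseteq\mathbb{R}^D$ let $d(z,A)=\inf_{a\in A}\|z-a\|$, $\mathrm{Med}(A)=\{z:\exists p\neq q\in A,\ \|p-z\|=\|q-z\|=d(z,A)\}$, and reach $\tau_A=\inf_{a\in A}d(a,\mathrm{Med}(A))$. Let $\mathcal{X}'\subset\mathbb{R}^D$ be nonempty compact with reach $\tau_{\mathcal{X}'}>0$, fix $0<\epsilon_I<\min\{\tau_{\mathcal{X}'},1\}$, and set $\mathcal{X}=\{x\in\mathbb{R}^D:d(x,\mathcal{X}')\le\epsilon_I\}$. Let $\zeta\colon\mathcal{X}\to\mathcal{X}'$ map $x$ to the (unique) point $\zeta(x)\in\mathcal{X}'$ with $\|x-\zeta(x)\|=d(x,\mathcal{X}')$, and define $\eta\colon\mathcal{X}\times[0,1]\to\mathbb{R}^D$ by $\eta(x,\delta)=x+\delta(\zeta(x)-x)$. *)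

theory Defs
  imports "HOL-Analysis.Analysis"
begin

definition medial_axis :: "'a::euclidean_space set \<Rightarrow> 'a set" where
  "medial_axis A = {z. \<exists>p q. p \<in> A \<and> q \<in> A \<and> p \<noteq> q \<and>
      dist p z = infdist z A \<and> dist q z = infdist z A}"

text \<open>Reach, valued in the extended reals so that an empty medial axis gives infinite reach
  (inf over the empty set is +infinity, as in the paper).\<close>
definition reach :: "'a::euclidean_space set \<Rightarrow> ereal" where
  "reach A = (INF a\<in>A. INF m\<in>medial_axis A. ereal (dist a m))"

definition tube :: "real \<Rightarrow> 'a::euclidean_space set \<Rightarrow> 'a set" where
  "tube eps A = {x. infdist x A \<le> eps}"

definition proj :: "'a::euclidean_space set \<Rightarrow> 'a \<Rightarrow> 'a" where
  "proj A x = (THE y. y \<in> A \<and> dist x y = infdist x A)"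

definition eta :: "'a::euclidean_space set \<Rightarrow> 'a \<Rightarrow> real \<Rightarrow> 'a" where
  "eta A x \<delta> = x + \<delta> *\<^sub>R (proj A x - x)"

end

theory Submission
  imports Defs
begin

theorem lemma1:
  fixes X' :: "'a::euclidean_space set" and eps \<delta> :: real and x :: 'a
  assumes "X' \<noteq> {}" and "compact X'" and "reach X' > 0"
    and "0 < eps" and "ereal eps < reach X'" and "eps < 1"
    and "x \<in> tube eps X'" and "0 \<le> \<delta>" and "\<delta> \<le> 1"
  shows "eta X' x \<delta> \<in> tube eps X' \<and> norm (eta X' x \<delta> - x) \<le> \<delta> \<and>
         (\<delta> > 0 \<longrightarrow> norm (eta X' x \<delta> - x) < \<delta> \<and> eta X' x \<delta> \<notin> frontier (tube eps X'))"
proof -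
  have cl: "closed X'" using assms(2) compact_imp_closed by blast
  define d where "d = infdist x X'"
  have d_le: "d \<le> eps" using assms(7) unfolding tube_def d_def by simp
  have d0: "d \<ge> 0" unfolding d_def by (simp add: infdist_nonneg)
  obtain p where p: "p \<in> X'" "infdist x X' = dist x p"
    using infdist_attains_inf[OF cl assms(1)] by blast
  have uniq: "q = p" if "q \<in> X'" "dist x q = infdist x X'" for q
  proof (rule ccontr)
    assume "q \<noteq> p"
    hence "x \<in> medial_axis X'" unfolding medial_axis_def
      using that p \<open>q \<noteq> p\<close> by (auto simp: dist_commute)
    hence "(INF m\<in>medial_axis X'. ereal (dist p m)) \<le> ereal (dist p x)"
      by (rule INF_lower)
    hence "reach X' \<le> ereal (dist p x)" unfolding reach_def
      using p(1) by (meson INF_lower2)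
    also have "\<dots> \<le> ereal eps" using p d_le d_def by (simp add: dist_commute)
    finally show False using assms(5) by simp
  qed
  have pr: "proj X' x = p" unfolding proj_def
  proof (rule the_equality)
    show "p \<in> X' \<and> dist x p = infdist x X'" using p by simp
    fix y assume "y \<in> X' \<and> dist x y = infdist x X'"
    thus "y = p" using uniq by blast
  qed
  have e: "eta X' x \<delta> - x = \<delta> *\<^sub>R (p - x)" unfolding eta_def pr by simp
  have np: "norm (p - x) = d" using p d_def by (simp add: dist_norm norm_minus_commute)
  have nrm: "norm (eta X' x \<delta> - x) = \<delta> * d" using e np assms(8) by simp
  have "eta X' x \<delta> - p = (1 - \<delta>) *\<^sub>R (x - p)" unfolding eta_def pr
    by (simp add: algebra_simps)
  hence dp: "dist (eta X' x \<delta>) p = (1 - \<delta>) * d" using np assms(9)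
    by (simp add: dist_norm norm_minus_commute)
  have id: "infdist (eta X' x \<delta>) X' \<le> (1 - \<delta>) * d"
    using infdist_le[OF p(1), of "eta X' x \<delta>"] dp by simp
  have t1: "eta X' x \<delta> \<in> tube eps X'" unfolding tube_def mem_Collect_eq
  proof -
    have "(1 - \<delta>) * d \<le> 1 * d" using d0 assms(8) by (intro mult_right_mono) auto
    thus "infdist (eta X' x \<delta>) X' \<le> eps" using id d_le by linarith
  qed
  have t2: "norm (eta X' x \<delta> - x) \<le> \<delta>" using nrm d_le assms(6,8) d0
  proof -
    have "\<delta> * d \<le> \<delta> * 1" using d_le assms(6,8) by (intro mult_left_mono) auto
    thus ?thesis using nrm by linarith
  qed
  have t3: "norm (eta X' x \<delta> - x) < \<delta> \<and> eta X' x \<delta> \<notin> frontier (tube eps X')" if "\<delta> > 0"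
  proof
    have "\<delta> * d < \<delta> * 1" using d_le assms(6) that by (intro mult_strict_left_mono) auto
    thus "norm (eta X' x \<delta> - x) < \<delta>" using nrm by linarith
    have lt: "infdist (eta X' x \<delta>) X' < eps"
    proof (cases "d = 0")
      case True then show ?thesis using id assms(4) by simp
    next
      case False
      hence "(1 - \<delta>) * d < 1 * d" using that d0 by (intro mult_strict_right_mono) auto
      then show ?thesis using id d_le by linarith
    qed
    have op: "open {y. infdist y X' < eps}"
      by (rule open_Collect_less) (auto intro: continuous_intros)
    have "{y. infdist y X' < eps} \<subseteq> tube eps X'" unfolding tube_def by auto
    hence "eta X' x \<delta> \<in> interior (tube eps X')"
      using op lt interior_maximal by blast
    thus "eta X' x \<delta> \<notin> frontier (tube eps X')" unfolding frontier_def by simp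
  qed
  show ?thesis using t1 t2 t3 by blast
qed

end
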